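(* Let $n$ be even. The signed cardinality statistic $SC$ is $0$-mesic under rowmotion on $\mathcal{IC}([n])$: its average over every rowmotion orbit equals $0$.
   Context: $[n]$ denotes the chain poset $1<2<\cdots<n$, ranked with $\mathrm{rk}(i)=i-1$. A subset $I\subseteq P$ of a finite poset is interval-closed if for all $x,y\in I$ and $z\in P$ with $x\le z\le y$ we have $z\in I$; $\mathcal{IC}(P)$ is the set of interval-closed subsets. For $x\in P$ the toggle $t_x$ sends $I$ to $I\triangle\{x\}$ if that is interval-closed and to $I$ otherwise. Rowmotion is $\mathrm{Row}=t_{x_1}\circ\cdots\circ t_{x_N}$, where $(x_1,\dots,x_N)$ is a linear extension of $P$ (toggling from the top down). For a ranked poset with minimum rank $0$, $SC(x)=1$ if $\mathrm{rk}(x)$ is even and $-1$ if odd, and $SC(I)=\sum_{x\in I}SC(x)$. A statistic is $c$-mesic if its average over every rowmotion orbit is $c$. *)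

theory Defs
  imports Complex_Main
begin

definition chain :: "nat \<Rightarrow> nat set" where
  "chain n = {1..n}"

definition interval_closed :: "nat set \<Rightarrow> nat set \<Rightarrow> bool" where
  "interval_closed P I \<longleftrightarrow> I \<subseteq> P \<and>
     (\<forall>x\<in>I. \<forall>y\<in>I. \<forall>z\<in>P. x \<le> z \<and> z \<le> y \<longrightarrow> z \<in> I)"

definition IC :: "nat \<Rightarrow> nat set set" where
  "IC n = {I. interval_closed (chain n) I}"

definition toggle :: "nat \<Rightarrow> nat \<Rightarrow> nat set \<Rightarrow> nat set" where
  "toggle n x I =
     (let J = (I - {x}) \<union> ({x} - I) in
      if interval_closed (chain n) J then J else I)"

text \<open>Rowmotion Row = t_1 \<circ> t_2 \<circ> ... \<circ> t_n, with (1,...,n) the (unique)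
  linear extension of [n]; so t_n is applied first (top down).\<close>
definition rowmotion :: "nat \<Rightarrow> nat set \<Rightarrow> nat set" where
  "rowmotion n = foldr (\<lambda>x f. toggle n x \<circ> f) [1..<n+1] id"

text \<open>Signed cardinality: SC(x) = 1 if rk(x) = x - 1 is even, -1 otherwise.\<close>
definition SC_elem :: "nat \<Rightarrow> int" where
  "SC_elem x = (if even (x - 1) then 1 else -1)"

definition SC :: "nat set \<Rightarrow> int" where
  "SC I = (\<Sum>x\<in>I. SC_elem x)"

definition orbit :: "('a \<Rightarrow> 'a) \<Rightarrow> 'a \<Rightarrow> 'a set" where
  "orbit f x = {(f ^^ k) x | k. True}"

definition mesic :: "('a \<Rightarrow> 'a) \<Rightarrow> 'a set \<Rightarrow> ('a \<Rightarrow> int) \<Rightarrow> real \<Rightarrow> bool" where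
  "mesic f S stat c \<longleftrightarrow>
     (\<forall>x\<in>S. (\<Sum>y\<in>orbit f x. real_of_int (stat y)) / real (card (orbit f x)) = c)"

end

theory Submission
  imports Defs
begin

lemma ic_interval: "1 \<le> a \<Longrightarrow> b \<le> n \<Longrightarrow> interval_closed (chain n) {a..b}"
  unfolding interval_closed_def chain_def by auto

lemma ic_empty: "interval_closed (chain n) {}"
  unfolding interval_closed_def by auto

lemma IC_iff: "I \<in> IC n \<longleftrightarrow> I = {} \<or> (\<exists>a b. 1 \<le> a \<and> a \<le> b \<and> b \<le> n \<and> I = {a..b})"
proof
  assume "I \<in> IC n"
  hence ic: "interval_closed (chain n) I" by (simp add: IC_def)
  show "I = {} \<or> (\<exists>a b. 1 \<le> a \<and> a \<le> b \<and> b \<le> n \<and> I = {a..b})"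
  proof (cases "I = {}")
    case False
    have sub: "I \<subseteq> {1..n}" using ic by (simp add: interval_closed_def chain_def)
    hence fin: "finite I" using finite_subset by blast
    define a where "a = Min I"
    define b where "b = Max I"
    have aI: "a \<in> I" using fin False a_def by simp
    have bI: "b \<in> I" using fin False b_def by simp
    have "I = {a..b}"
    proof
      show "I \<subseteq> {a..b}"
      proof
        fix z assume "z \<in> I"
        thus "z \<in> {a..b}" unfolding a_def b_def using fin by simp
      qed
      show "{a..b} \<subseteq> I"
      proof
        fix z assume "z \<in> {a..b}"
        hence z: "a \<le> z" "z \<le> b" by auto
        have "a \<in> {1..n}" "b \<in> {1..n}" using aI bI sub by blast+
        hence zc: "z \<in> chain n" using z by (simp add: chain_def)
        have "\<forall>x\<in>I. \<forall>y\<in>I. \<forall>z\<in>chain n. x \<le> z \<and> z \<le> y \<longrightarrow> z \<in> I"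
          using ic unfolding interval_closed_def by blast
        thus "z \<in> I" using aI bI zc z by blast
      qed
    qed
    moreover have "1 \<le> a" using aI sub by auto
    moreover have "b \<le> n" using bI sub by auto
    moreover have "a \<le> b" unfolding a_def using bI fin by simp
    ultimately show ?thesis by blast
  qed simp
next
  assume "I = {} \<or> (\<exists>a b. 1 \<le> a \<and> a \<le> b \<and> b \<le> n \<and> I = {a..b})"
  thus "I \<in> IC n" using ic_interval ic_empty by (auto simp: IC_def)
qed

lemma toggle_changed: "interval_closed (chain n) J \<Longrightarrow> J = (I - {x}) \<union> ({x} - I) \<Longrightarrow> toggle n x I = J"
  unfolding toggle_def Let_def by simp

lemma toggle_same: "\<not> interval_closed (chain n) ((I - {x}) \<union> ({x} - I)) \<Longrightarrow> toggle n x I = I"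
  unfolding toggle_def Let_def by simp

lemma not_ic: "p \<in> J \<Longrightarrow> q \<in> J \<Longrightarrow> p \<le> z \<Longrightarrow> z \<le> q \<Longrightarrow> z \<in> chain n \<Longrightarrow> z \<notin> J \<Longrightarrow> \<not> interval_closed (chain n) J"
  unfolding interval_closed_def by blast

lemma far_above: "a \<le> b \<Longrightarrow> b + 1 < x \<Longrightarrow> x \<le> n \<Longrightarrow> toggle n x {a..b} = {a..b}"
  by (rule toggle_same, rule not_ic[of b _ x "b+1"]) (auto simp: chain_def)

lemma far_below: "x + 1 < a \<Longrightarrow> a \<le> b \<Longrightarrow> 1 \<le> x \<Longrightarrow> b \<le> n \<Longrightarrow> toggle n x {a..b} = {a..b}"
  by (rule toggle_same, rule not_ic[of x _ a "x+1"]) (auto simp: chain_def)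

lemma interior: "a < x \<Longrightarrow> x < b \<Longrightarrow> b \<le> n \<Longrightarrow> toggle n x {a..b} = {a..b}"
  by (rule toggle_same, rule not_ic[of a _ b x]) (auto simp: chain_def)

lemma ext_right: "1 \<le> a \<Longrightarrow> a \<le> b \<Longrightarrow> b + 1 \<le> n \<Longrightarrow> toggle n (b+1) {a..b} = {a..b+1}"
  by (rule toggle_changed, rule ic_interval) auto

lemma ext_left: "1 \<le> x \<Longrightarrow> x + 1 \<le> b \<Longrightarrow> b \<le> n \<Longrightarrow> toggle n x {x+1..b} = {x..b}"
  by (rule toggle_changed, rule ic_interval) auto

lemma shr_left: "1 \<le> a \<Longrightarrow> a < b \<Longrightarrow> b \<le> n \<Longrightarrow> toggle n a {a..b} = {a+1..b}"
  by (rule toggle_changed, rule ic_interval) auto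

lemma shr_right: "1 \<le> a \<Longrightarrow> a < b \<Longrightarrow> b \<le> n \<Longrightarrow> toggle n b {a..b} = {a..b-1}"
  by (rule toggle_changed, rule ic_interval) auto

lemma single: "toggle n a {a..a} = {}"
  by (rule toggle_changed, rule ic_empty) auto

lemma single'[simp]: "toggle n a {a} = {}"
  using single[of n a] by simp

lemma from_empty: "1 \<le> x \<Longrightarrow> x \<le> n \<Longrightarrow> toggle n x {} = {x..x}"
  by (rule toggle_changed, rule ic_interval) auto

definition R :: "nat \<Rightarrow> nat \<Rightarrow> nat set \<Rightarrow> nat set" where
  "R n k = foldr (\<lambda>x f. toggle n x \<circ> f) [k..<n+1] id"

lemma R_step: "k \<le> n \<Longrightarrow> R n k I = toggle n k (R n (Suc k) I)"
  unfolding R_def by (simp add: upt_conv_Cons del: upt_Suc)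

lemma R_top: "R n (n+1) I = I"
  unfolding R_def by simp

lemma R_top'[simp]: "R n (Suc n) I = I"
  unfolding R_def by simp

lemma row_R: "rowmotion n = R n 1"
  unfolding rowmotion_def R_def by simp

lemma R_const:
  assumes "R n j I = T" "i \<le> j" "j \<le> n+1" "\<And>x. i \<le> x \<Longrightarrow> x < j \<Longrightarrow> toggle n x T = T"
  shows "R n i I = T"
  using assms(2)
proof (induction rule: inc_induct)
  case base then show ?case using assms(1) .
next
  case (step m)
  have "R n m I = toggle n m (R n (Suc m) I)" using step assms(3) by (intro R_step) simp
  thus ?case using step assms(4) by simp
qed

lemma R_grow:
  assumes "R n j I = {j..c}" "1 \<le> i" "i \<le> j" "j \<le> c" "c \<le> n"
  shows "R n i I = {i..c}"
  using assms(3)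
proof (induction rule: inc_induct)
  case base then show ?case using assms(1) .
next
  case (step m)
  have "R n m I = toggle n m (R n (Suc m) I)" using step assms by (intro R_step) simp
  also have "\<dots> = toggle n m {m+1..c}" using step by simp
  also have "\<dots> = {m..c}" using step assms by (intro ext_left) auto
  finally show ?case .
qed

lemma R_shrink:
  assumes "1 \<le> a" "a < i" "i \<le> n+1" "a \<le> n"
  shows "R n i {a..n} = {a..i-1}"
  using assms(3)
proof (induction rule: inc_induct)
  case base then show ?case by (simp add: R_top)
next
  case (step m)
  have "R n m {a..n} = toggle n m (R n (Suc m) {a..n})" using step assms by (intro R_step) simp
  also have "\<dots> = toggle n m {a..m}" using step by simp
  also have "\<dots> = {a..m-1}" using step assms by (intro shr_right) auto
  finally show ?case .
qed

lemma row_empty: "rowmotion n {} = {1..n}"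
proof (cases "n = 0")
  case True
  have "R 0 1 {} = {}" using R_top'[of 0 "{}"] by simp
  thus ?thesis using True by (simp add: row_R)
next
  case False
  have "R n n {} = toggle n n (R n (Suc n) {})" by (rule R_step) simp
  also have "\<dots> = toggle n n {}" by (simp only: R_top')
  also have "\<dots> = {n..n}" using False by (intro from_empty) auto
  finally have rn: "R n n {} = {n..n}" .
  have "R n 1 {} = {1..n}"
  proof (rule R_grow[OF rn])
    show "1 \<le> (1::nat)" "1 \<le> n" "n \<le> n" "n \<le> n" using False by auto
  qed
  thus ?thesis by (simp add: row_R)
qed

lemma row_shift:
  assumes "1 \<le> a" "a \<le> b" "b < n"
  shows "rowmotion n {a..b} = {a+1..b+1}"
proof -
  have s1: "R n (b+2) {a..b} = {a..b}"
  proof (rule R_const[of n "n+1"])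
    show "R n (n+1) {a..b} = {a..b}" by (rule R_top)
    show "b+2 \<le> n+1" "n+1 \<le> n+1" using assms by simp_all
    fix x assume "b+2 \<le> x" "x < n+1"
    thus "toggle n x {a..b} = {a..b}" using assms by (intro far_above) auto
  qed
  have s2: "R n (b+1) {a..b} = {a..b+1}"
    using R_step[of "b+1" n "{a..b}"] s1 assms ext_right[of a b n] by simp
  have s3: "R n (a+1) {a..b} = {a..b+1}"
  proof (rule R_const[OF s2])
    show "a+1 \<le> b+1" "b+1 \<le> n+1" using assms by simp_all
    fix x assume "a+1 \<le> x" "x < b+1"
    thus "toggle n x {a..b+1} = {a..b+1}" using assms by (intro interior) auto
  qed
  have s4: "R n a {a..b} = {a+1..b+1}"
    using R_step[of a n "{a..b}"] s3 assms by (simp add: shr_left)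
  have "R n 1 {a..b} = {a+1..b+1}"
  proof (rule R_const[OF s4])
    show "1 \<le> a" "a \<le> n+1" using assms by simp_all
    fix x assume "1 \<le> x" "x < a"
    thus "toggle n x {a+1..b+1} = {a+1..b+1}" using assms by (intro far_below) auto
  qed
  thus ?thesis by (simp add: row_R)
qed

lemma row_top:
  assumes "1 \<le> a" "a \<le> n"
  shows "rowmotion n {a..n} = {1..a-1}"
proof -
  have s1: "R n (a+1) {a..n} = {a..a}" using R_shrink[of a "a+1" n] assms by simp
  have s2: "R n a {a..n} = {}" using R_step[of a n "{a..n}"] s1 assms by (simp add: single)
  show ?thesis
  proof (cases "a = 1")
    case True then show ?thesis using s2 by (simp add: row_R)
  next
    case False
    have s3: "R n (a-1) {a..n} = {a-1..a-1}"
      using R_step[of "a-1" n "{a..n}"] s2 assms False by (simp add: from_empty)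
    have "R n 1 {a..n} = {1..a-1}" by (rule R_grow[OF s3]) (use assms False in auto)
    thus ?thesis by (simp add: row_R)
  qed
qed

lemma SC_elem_Suc: "1 \<le> x \<Longrightarrow> SC_elem (Suc x) = - SC_elem x"
  unfolding SC_elem_def by (cases x) auto

lemma SC_shift: "1 \<le> a \<Longrightarrow> SC {Suc a..Suc b} = - SC {a..b}"
proof -
  assume a: "1 \<le> a"
  have "SC {Suc a..Suc b} = (\<Sum>i\<in>{a..b}. SC_elem (Suc i))"
    unfolding SC_def using sum.shift_bounds_cl_Suc_ivl[of SC_elem a b] by simp
  also have "\<dots> = (\<Sum>i\<in>{a..b}. - SC_elem i)" using a by (intro sum.cong) (auto simp: SC_elem_Suc)
  finally show ?thesis by (simp add: SC_def sum_negf)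
qed

lemma SC_elem_odd: "SC_elem (2*m+1) = 1"
  unfolding SC_elem_def by simp

lemma SC_elem_even: "SC_elem (2*m+2) = -1"
  unfolding SC_elem_def by simp

lemma SC_even: "SC {1..2*m} = 0"
proof (induction m)
  case 0 then show ?case by (simp add: SC_def)
next
  case (Suc m)
  have e: "2 * Suc m = Suc (Suc (2*m))" by simp
  have "SC {1..2*Suc m} = SC {1..2*m} + SC_elem (Suc (2*m)) + SC_elem (Suc (Suc (2*m)))"
    unfolding SC_def e by (simp add: sum.cl_ivl_Suc)
  also have "\<dots> = 0" using Suc SC_elem_odd[of m] SC_elem_even[of m] by simp
  finally show ?case .
qed

lemma SC_split: "1 \<le> a \<Longrightarrow> a \<le> n \<Longrightarrow> SC {1..n} = SC {1..a-1} + SC {a..n}"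
proof -
  assume "1 \<le> a" "a \<le> n"
  hence "{1..n} = {1..a-1} \<union> {a..n}" by auto
  moreover have "{1..a-1} \<inter> {a..n} = {}" by auto
  ultimately show ?thesis unfolding SC_def by (simp add: sum.union_disjoint)
qed

lemma SC_row:
  assumes "even n" "I \<in> IC n"
  shows "SC (rowmotion n I) = - SC I"
proof -
  obtain m where m: "n = 2*m" using assms(1) by (elim evenE)
  have z: "SC {1..n} = 0" unfolding m by (rule SC_even)
  have c: "I = {} \<or> (\<exists>a b. 1 \<le> a \<and> a \<le> b \<and> b \<le> n \<and> I = {a..b})"
    using assms(2) by (simp only: IC_iff)
  show ?thesis
  proof (cases "I = {}")
    case True
    have "SC (rowmotion n I) = 0" unfolding True row_empty by (rule z)
    thus ?thesis using True by (simp add: SC_def)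
  next
    case False
    then obtain a b where ab: "1 \<le> a" "a \<le> b" "b \<le> n" "I = {a..b}" using c by blast
    show ?thesis
    proof (cases "b < n")
      case True
      have "rowmotion n I = {Suc a..Suc b}" using row_shift[OF ab(1,2) True] ab(4) by simp
      thus ?thesis using SC_shift[OF ab(1), of b] ab(4) by simp
    next
      case False
      hence bn: "b = n" using ab by simp
      have r: "rowmotion n I = {1..a-1}" using row_top[of a n] ab bn by simp
      have "SC {1..a-1} + SC {a..n} = 0" using SC_split[of a n] ab bn z by simp
      thus ?thesis using r ab(4) bn by simp
    qed
  qed
qed

lemma toggle_IC: "I \<in> IC n \<Longrightarrow> toggle n x I \<in> IC n"
  unfolding toggle_def Let_def IC_def by simp

lemma toggle_invol: "I \<in> IC n \<Longrightarrow> toggle n x (toggle n x I) = I"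
proof -
  assume I: "I \<in> IC n"
  define J where "J = (I - {x}) \<union> ({x} - I)"
  have bk: "(J - {x}) \<union> ({x} - J) = I" unfolding J_def by auto
  show ?thesis
  proof (cases "interval_closed (chain n) J")
    case True
    hence "toggle n x I = J" unfolding toggle_def Let_def J_def by simp
    thus ?thesis using I bk unfolding toggle_def Let_def IC_def by simp
  next
    case False
    hence "toggle n x I = I" unfolding toggle_def Let_def J_def by simp
    thus ?thesis by simp
  qed
qed

lemma foldr_props:
  "inj_on (foldr (\<lambda>x f. toggle n x \<circ> f) xs id) (IC n) \<and>
   foldr (\<lambda>x f. toggle n x \<circ> f) xs id ` IC n \<subseteq> IC n"
proof (induction xs)
  case Nil then show ?case by simp
next
  case (Cons y xs)
  define g where "g = foldr (\<lambda>x f. toggle n x \<circ> f) xs id"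
  have igs: "inj_on g (IC n) \<and> g ` IC n \<subseteq> IC n" using Cons.IH unfolding g_def .
  have ig: "inj_on g (IC n)" and sg: "g ` IC n \<subseteq> IC n" using igs by blast+
  have inj_t: "inj_on (toggle n y) (IC n)"
    by (rule inj_on_inverseI[where g="toggle n y"]) (rule toggle_invol)
  have P1: "inj_on (toggle n y \<circ> g) (IC n)"
    by (rule comp_inj_on[OF ig inj_on_subset[OF inj_t sg]])
  have P2: "(toggle n y \<circ> g) ` IC n \<subseteq> IC n"
  proof
    fix z assume "z \<in> (toggle n y \<circ> g) ` IC n"
    then obtain w where w: "w \<in> IC n" "z = toggle n y (g w)" by auto
    have "g w \<in> IC n" using sg w(1) by blast
    thus "z \<in> IC n" using w(2) toggle_IC by simp
  qed
  have eqf: "foldr (\<lambda>x f. toggle n x \<circ> f) (y # xs) id = toggle n y \<circ> g"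
    unfolding g_def by simp
  show ?case unfolding eqf using P1 P2 by blast
qed

theorem proposition3p16:
  fixes n :: nat
  assumes "even n"
  shows "mesic (rowmotion n) (IC n) SC 0"
  unfolding mesic_def
proof
  fix x assume x: "x \<in> IC n"
  let ?f = "rowmotion n"
  let ?O = "orbit ?f x"
  have inj: "inj_on ?f (IC n)" and into: "?f ` IC n \<subseteq> IC n"
    using foldr_props[of n "[1..<n+1]"] unfolding rowmotion_def by auto
  have powIC: "(?f ^^ k) x \<in> IC n" for k
  proof (induction k)
    case 0 then show ?case using x by simp
  next
    case (Suc k) then show ?case using into by auto
  qed
  have Osub: "?O \<subseteq> IC n" unfolding orbit_def using powIC by auto
  have finIC: "finite (IC n)"
  proof (rule finite_subset[of _ "Pow {1..n}"])
    show "IC n \<subseteq> Pow {1..n}" unfolding IC_def interval_closed_def chain_def by blast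
  qed simp
  have finO: "finite ?O" using Osub finIC finite_subset by blast
  have img: "?f ` ?O \<subseteq> ?O"
  proof
    fix y assume "y \<in> ?f ` ?O"
    then obtain k where "y = ?f ((?f ^^ k) x)" unfolding orbit_def by auto
    hence "y = (?f ^^ Suc k) x" by simp
    thus "y \<in> ?O" unfolding orbit_def by blast
  qed
  have injO: "inj_on ?f ?O" using inj Osub inj_on_subset by blast
  have eq: "?f ` ?O = ?O" using endo_inj_surj[OF finO img injO] .
  have "(\<Sum>y\<in>?O. SC y) = (\<Sum>y\<in>?f ` ?O. SC y)" using eq by simp
  also have "\<dots> = (\<Sum>y\<in>?O. SC (?f y))" using injO by (simp add: sum.reindex)
  also have "\<dots> = (\<Sum>y\<in>?O. - SC y)"   proof (rule sum.cong)
    fix y assume "y \<in> ?O"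
    hence "y \<in> IC n" using Osub by blast
    thus "SC (?f y) = - SC y" using assms by (rule SC_row[rotated])
  qed simp
  finally have "(\<Sum>y\<in>?O. SC y) = 0" by (simp add: sum_negf)
  hence "real_of_int (\<Sum>y\<in>?O. SC y) = 0" by simp
  hence "(\<Sum>y\<in>?O. real_of_int (SC y)) = 0" by (simp only: of_int_sum)
  thus "(\<Sum>y\<in>?O. real_of_int (SC y)) / real (card ?O) = 0" by simp
qed

end
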